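(* Let $\beta\in(3/2,\beta^*]$. Suppose $\omega,\omega'\in\Omega$ satisfy $\omega\prec\omega'$. Then for every $\vec z\in S_\beta$, $$(d_1(\omega,\vec z),d_2(\omega,\vec z),\ldots)\preceq(d_1(\omega',\vec z),d_2(\omega',\vec z),\ldots).$$
   Context: $\beta^*\approx1.5437$ is the real root of $x^3-2x^2+2x=2$. $\vec q_0=(0,0)$, $\vec q_1=(1,0)$, $\vec q_2=(0,1)$, $f_i(\vec z)=(\vec z+\vec q_i)/\beta$, $S_\beta$ the attractor of this IFS. $H=\{(x,y):x<\frac1\beta,\ y<\frac1\beta,\ x+y>\frac{1}{\beta(\beta-1)}\}$; $\tilde E_0=([0,\frac1\beta)\times[0,\frac1\beta))\setminus H$; $\tilde E_1=\{0\le y<\frac1\beta,\ \frac{1}{\beta(\beta-1)}<x+y\le\frac1{\beta-1}\}\setminus H$; $\tilde E_2=\{0\le x<\frac1\beta,\ \frac{1}{\beta(\beta-1)}<x+y\le\frac1{\beta-1}\}\setminus H$; $\tilde C_{01}=\{x\ge\frac1\beta,\ y\ge0,\ x+y\le\frac{1}{\beta(\beta-1)}\}$; $\tilde C_{12}=\{x\ge\frac1\beta,\ y\ge\frac1\beta,\ x+y\le\frac1{\beta-1}\}$; $\tilde C_{02}=\{x\ge0,\ y\ge\frac1\beta,\ x+y\le\frac{1}{\beta(\beta-1)}\}$. For $\{i,j,k\}=\{0,1,2\}$, $E_i=\bigl(\tilde E_i\cup\bigcup_{n\ge1}f_jf_i^n(H)\cup\bigcup_{n\ge1}f_kf_i^n(H)\bigr)\setminus\bigcup_{n\ge0}f_i^n(H)$;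 for $ij\in\{01,12,02\}$, $C_{ij}=\tilde C_{ij}\setminus\bigl(\bigcup_{n\ge1}f_if_j^n(H)\cup\bigcup_{n\ge1}f_jf_i^n(H)\bigr)$. $\Omega=\{0,1\}^{\mathbb N}$ with left shift $\sigma$. $K_\beta:\Omega\times S_\beta\to\Omega\times S_\beta$: $K_\beta(\omega,\vec z)=(\omega,\beta\vec z-\vec q_i)$ if $\vec z\in E_i$; $(\sigma\omega,\beta\vec z-\vec q_i)$ if $\omega_1=0$, $\vec z\in C_{ij}$; $(\sigma\omega,\beta\vec z-\vec q_j)$ if $\omega_1=1$, $\vec z\in C_{ij}$. The digit $d_1(\omega,\vec z)$ is the vector subtracted, and $d_n=d_1\circ K_\beta^{n-1}$. $\prec,\preceq$ denote lexicographic order on $\Omega$ and on $\{\vec q_0,\vec q_1,\vec q_2\}^{\mathbb N}$ (with $\vec q_0<\vec q_1<\vec q_2$). *)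

theory Defs
  imports "HOL-Analysis.Analysis"
begin

text \<open>beta-star: the real root of x^3 - 2x^2 + 2x = 2 (unique, the cubic is strictly increasing).\<close>
definition beta_star :: real where
  "beta_star = (THE x::real. x^3 - 2*x^2 + 2*x = 2)"

definition qv :: "nat \<Rightarrow> real \<times> real" where
  "qv i = (if i = 0 then (0,0) else if i = 1 then (1,0) else (0,1))"

definition ifs_map :: "real \<Rightarrow> nat \<Rightarrow> real \<times> real \<Rightarrow> real \<times> real" where
  "ifs_map \<beta> i z = (1/\<beta>) *\<^sub>R (z + qv i)"

definition attractor :: "real \<Rightarrow> (real \<times> real) set" where
  "attractor \<beta> = (THE S. compact S \<and> S \<noteq> {} \<and> S = (\<Union>i\<in>{0,1,2}. ifs_map \<beta> i ` S))"

definition Hset :: "real \<Rightarrow> (real \<times> real) set" where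
  "Hset \<beta> = {(x,y). x < 1/\<beta> \<and> y < 1/\<beta> \<and> x + y > 1/(\<beta>*(\<beta>-1))}"

definition Et :: "real \<Rightarrow> nat \<Rightarrow> (real \<times> real) set" where
  "Et \<beta> i =
    (if i = 0 then {(x,y). 0 \<le> x \<and> x < 1/\<beta> \<and> 0 \<le> y \<and> y < 1/\<beta>} - Hset \<beta>
     else if i = 1 then {(x,y). 0 \<le> y \<and> y < 1/\<beta> \<and> 1/(\<beta>*(\<beta>-1)) < x + y \<and> x + y \<le> 1/(\<beta>-1)} - Hset \<beta>
     else {(x,y). 0 \<le> x \<and> x < 1/\<beta> \<and> 1/(\<beta>*(\<beta>-1)) < x + y \<and> x + y \<le> 1/(\<beta>-1)} - Hset \<beta>)"

definition Ct :: "real \<Rightarrow> nat \<Rightarrow> nat \<Rightarrow> (real \<times> real) set" where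
  "Ct \<beta> i j =
    (if (i,j) = (0,1) then {(x,y). x \<ge> 1/\<beta> \<and> y \<ge> 0 \<and> x + y \<le> 1/(\<beta>*(\<beta>-1))}
     else if (i,j) = (1,2) then {(x,y). x \<ge> 1/\<beta> \<and> y \<ge> 1/\<beta> \<and> x + y \<le> 1/(\<beta>-1)}
     else {(x,y). x \<ge> 0 \<and> y \<ge> 1/\<beta> \<and> x + y \<le> 1/(\<beta>*(\<beta>-1))})"

definition Eset :: "real \<Rightarrow> nat \<Rightarrow> (real \<times> real) set" where
  "Eset \<beta> i =
    (Et \<beta> i \<union> (\<Union>j\<in>{0,1,2} - {i}. \<Union>n\<in>{1..}. ifs_map \<beta> j ` ((ifs_map \<beta> i ^^ n) ` Hset \<beta>)))
     - (\<Union>n. (ifs_map \<beta> i ^^ n) ` Hset \<beta>)"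

definition Cset :: "real \<Rightarrow> nat \<Rightarrow> nat \<Rightarrow> (real \<times> real) set" where
  "Cset \<beta> i j =
    Ct \<beta> i j - ((\<Union>n\<in>{1..}. ifs_map \<beta> i ` ((ifs_map \<beta> j ^^ n) ` Hset \<beta>))
                 \<union> (\<Union>n\<in>{1..}. ifs_map \<beta> j ` ((ifs_map \<beta> i ^^ n) ` Hset \<beta>)))"

text \<open>Omega = {0,1}^N as bool sequences (False = 0, True = 1); \<omega> 0 is the first coordinate \<omega>_1.
  The digit is returned as the index i of the vector q_i subtracted.\<close>
definition digit1 :: "real \<Rightarrow> (nat \<Rightarrow> bool) \<Rightarrow> real \<times> real \<Rightarrow> nat" where
  "digit1 \<beta> \<omega> z =
    (if z \<in> Eset \<beta> 0 then 0
     else if z \<in> Eset \<beta> 1 then 1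
     else if z \<in> Eset \<beta> 2 then 2
     else if z \<in> Cset \<beta> 0 1 then (if \<omega> 0 then 1 else 0)
     else if z \<in> Cset \<beta> 1 2 then (if \<omega> 0 then 2 else 1)
     else if z \<in> Cset \<beta> 0 2 then (if \<omega> 0 then 2 else 0)
     else 0)"

definition Kmap :: "real \<Rightarrow> (nat \<Rightarrow> bool) \<times> (real \<times> real) \<Rightarrow> (nat \<Rightarrow> bool) \<times> (real \<times> real)" where
  "Kmap \<beta> p = (case p of (\<omega>, z) \<Rightarrow>
     ((if z \<notin> Eset \<beta> 0 \<union> Eset \<beta> 1 \<union> Eset \<beta> 2 \<and> z \<in> Cset \<beta> 0 1 \<union> Cset \<beta> 1 2 \<union> Cset \<beta> 0 2
       then (\<lambda>n. \<omega> (Suc n)) else \<omega>),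
      \<beta> *\<^sub>R z - qv (digit1 \<beta> \<omega> z)))"

text \<open>digits \<beta> \<omega> z n = d_(n+1)(\<omega>, z).\<close>
definition digits :: "real \<Rightarrow> (nat \<Rightarrow> bool) \<Rightarrow> real \<times> real \<Rightarrow> nat \<Rightarrow> nat" where
  "digits \<beta> \<omega> z n = (case (Kmap \<beta> ^^ n) (\<omega>, z) of (\<omega>', z') \<Rightarrow> digit1 \<beta> \<omega>' z')"

definition lex_less :: "(nat \<Rightarrow> 'a::linorder) \<Rightarrow> (nat \<Rightarrow> 'a) \<Rightarrow> bool" where
  "lex_less a b \<longleftrightarrow> (\<exists>n. (\<forall>k<n. a k = b k) \<and> a n < b n)"

definition lex_le :: "(nat \<Rightarrow> 'a::linorder) \<Rightarrow> (nat \<Rightarrow> 'a) \<Rightarrow> bool" where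
  "lex_le a b \<longleftrightarrow> a = b \<or> lex_less a b"

end

theory Submission
  imports Defs
begin

definition isC :: "real \<Rightarrow> real \<times> real \<Rightarrow> bool" where
  "isC \<beta> z \<longleftrightarrow> z \<notin> Eset \<beta> 0 \<union> Eset \<beta> 1 \<union> Eset \<beta> 2 \<and> z \<in> Cset \<beta> 0 1 \<union> Cset \<beta> 1 2 \<union> Cset \<beta> 0 2"

lemma digA: "\<not> isC \<beta> z \<Longrightarrow> digit1 \<beta> \<omega> z = digit1 \<beta> \<omega>' z"
  unfolding isC_def digit1_def by auto

lemma digB: "isC \<beta> z \<Longrightarrow> (digit1 \<beta> \<omega> z = digit1 \<beta> \<omega>' z) \<longleftrightarrow> (\<omega> 0 = \<omega>' 0)"
  unfolding isC_def digit1_def by auto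

lemma digC: "isC \<beta> z \<Longrightarrow> \<not> \<omega> 0 \<Longrightarrow> \<omega>' 0 \<Longrightarrow> digit1 \<beta> \<omega> z < digit1 \<beta> \<omega>' z"
  unfolding isC_def digit1_def by auto

lemma Kmap_eq: "Kmap \<beta> (\<omega>, z) = (if isC \<beta> z then (\<lambda>m. \<omega> (Suc m)) else \<omega>, \<beta> *\<^sub>R z - qv (digit1 \<beta> \<omega> z))"
  unfolding Kmap_def isC_def by simp

lemma invariant:
  assumes n: "\<forall>k<n. \<omega> k = \<omega>' k" "\<omega> n \<noteq> \<omega>' n"
  shows "(\<forall>t<k. digits \<beta> \<omega> z t = digits \<beta> \<omega>' z t) \<Longrightarrow>
    \<exists>c w. c \<le> n \<and> (Kmap \<beta> ^^ k) (\<omega>, z) = ((\<lambda>m. \<omega> (m + c)), w)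
        \<and> (Kmap \<beta> ^^ k) (\<omega>', z) = ((\<lambda>m. \<omega>' (m + c)), w)"
proof (induction k)
  case 0
  show ?case by (rule exI[of _ 0]) simp
next
  case (Suc k)
  then obtain c w where c: "c \<le> n" and e1: "(Kmap \<beta> ^^ k) (\<omega>, z) = ((\<lambda>m. \<omega> (m + c)), w)"
    and e2: "(Kmap \<beta> ^^ k) (\<omega>', z) = ((\<lambda>m. \<omega>' (m + c)), w)" by auto
  have dk: "digit1 \<beta> (\<lambda>m. \<omega> (m + c)) w = digit1 \<beta> (\<lambda>m. \<omega>' (m + c)) w"
    using Suc.prems[rule_format, of k] e1 e2 by (simp add: digits_def)
  show ?case
  proof (cases "isC \<beta> w")
    case True
    then have "\<omega> c = \<omega>' c" using digB[OF True, of "\<lambda>m. \<omega> (m + c)" "\<lambda>m. \<omega>' (m + c)"] dk by simp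
    then have "c \<noteq> n" using n by auto
    then have "Suc c \<le> n" using c by simp
    then show ?thesis using True e1 e2 dk
      by (intro exI[of _ "Suc c"] exI[of _ "\<beta> *\<^sub>R w - qv (digit1 \<beta> (\<lambda>m. \<omega> (m + c)) w)"])
         (simp add: Kmap_eq)
  next
    case False
    then show ?thesis using c e1 e2 dk
      by (intro exI[of _ c] exI[of _ "\<beta> *\<^sub>R w - qv (digit1 \<beta> (\<lambda>m. \<omega> (m + c)) w)"])
         (simp add: Kmap_eq)
  qed
qed

theorem theorem6p5:
  fixes \<beta> :: real and \<omega> \<omega>' :: "nat \<Rightarrow> bool" and z :: "real \<times> real"
  assumes "3/2 < \<beta>" and "\<beta> \<le> beta_star"
    and "lex_less \<omega> \<omega>'"
    and "z \<in> attractor \<beta>"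
  shows "lex_le (digits \<beta> \<omega> z) (digits \<beta> \<omega>' z)"
proof -
  obtain n where n: "\<forall>k<n. \<omega> k = \<omega>' k" "\<omega> n < \<omega>' n"
    using assms(3) unfolding lex_less_def by blast
  have nf: "\<not> \<omega> n" "\<omega>' n" using n(2) by auto
  show ?thesis
  proof (cases "digits \<beta> \<omega> z = digits \<beta> \<omega>' z")
    case True
    then show ?thesis by (simp add: lex_le_def)
  next
    case False
    define k where "k = (LEAST t. digits \<beta> \<omega> z t \<noteq> digits \<beta> \<omega>' z t)"
    have ex: "\<exists>t. digits \<beta> \<omega> z t \<noteq> digits \<beta> \<omega>' z t" using False by auto
    have kd: "digits \<beta> \<omega> z k \<noteq> digits \<beta> \<omega>' z k"
      unfolding k_def using LeastI_ex[OF ex] .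
    have before: "\<forall>t<k. digits \<beta> \<omega> z t = digits \<beta> \<omega>' z t"
      unfolding k_def using not_less_Least by blast
    obtain c w where c: "c \<le> n" and e1: "(Kmap \<beta> ^^ k) (\<omega>, z) = ((\<lambda>m. \<omega> (m + c)), w)"
      and e2: "(Kmap \<beta> ^^ k) (\<omega>', z) = ((\<lambda>m. \<omega>' (m + c)), w)"
      using invariant[of n \<omega> \<omega>' k \<beta> z] n before by auto
    have dne: "digit1 \<beta> (\<lambda>m. \<omega> (m + c)) w \<noteq> digit1 \<beta> (\<lambda>m. \<omega>' (m + c)) w"
      using kd e1 e2 by (simp add: digits_def)
    have iC: "isC \<beta> w" using dne digA by blast
    have "\<omega> c \<noteq> \<omega>' c" using digB[OF iC, of "\<lambda>m. \<omega> (m + c)" "\<lambda>m. \<omega>' (m + c)"] dne by simp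
    then have "c = n" using c n(1) by (meson le_neq_implies_less)
    then have lt: "digit1 \<beta> (\<lambda>m. \<omega> (m + c)) w < digit1 \<beta> (\<lambda>m. \<omega>' (m + c)) w"
      using digC[OF iC] nf by simp
    have "lex_less (digits \<beta> \<omega> z) (digits \<beta> \<omega>' z)"
      unfolding lex_less_def using before lt e1 e2 by (intro exI[of _ k]) (simp add: digits_def)
    then show ?thesis by (simp add: lex_le_def)
  qed
qed

end
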